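(* Let $q \ge 2$ and $n$ be positive integers. (1) AME states of defect $1$ in $(\mathbb{C}^q)^{\otimes n}$ do not exist if $n > 4q^2$ when $n$ is even, and if $n > 4q^2+4q+1$ when $n$ is odd. (2) AME states of defect $2$ in $(\mathbb{C}^q)^{\otimes n}$ do not exist if $n > 6q^2+2$ when $n$ is even, and if $n > 6q^2+6q+3$ when $n$ is odd.
   Context: A pure state $|\psi\rangle \in (\mathbb{C}^q)^{\otimes n}$ is called $k$-uniform if, with $\rho = |\psi\rangle\langle\psi|$, for every subset $S \subseteq \{1,\dots,n\}$ with $|S| = k$ the reduced state of $\rho$ on the parties in $S$ (partial trace over the complementary $n-k$ parties) equals $I/q^k$, where $I$ is the identity on $(\mathbb{C}^q)^{\otimes k}$. For an integer $l \ge 0$, an AME state of defect $l$ in $(\mathbb{C}^q)^{\otimes n}$ is a $(\lfloor n/2\rfloor - l)$-uniform state in $(\mathbb{C}^q)^{\otimes n}$. *)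

theory Defs
  imports Complex_Main "HOL-Library.FuncSet"
begin

text \<open>Parties are indexed by 0..<n, local basis states by 0..<q. A vector in
(C^q)^{tensor n} is given by its coefficients on the computational basis, i.e. a
function from basis labels (elements of PiE {0..<n} (\<lambda>_. {0..<q})) to complex.\<close>

definition labels :: "nat \<Rightarrow> nat set \<Rightarrow> (nat \<Rightarrow> nat) set" where
  "labels q S = PiE S (\<lambda>_. {0..<q})"

definition merge_lbl :: "nat set \<Rightarrow> (nat \<Rightarrow> nat) \<Rightarrow> (nat \<Rightarrow> nat) \<Rightarrow> (nat \<Rightarrow> nat)" where
  "merge_lbl S a c = (\<lambda>i. if i \<in> S then a i else c i)"

text \<open>Matrix entry (a,b) of the reduced state Tr_{complement of S} |psi><psi|.\<close>
definition reduced_state ::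
  "nat \<Rightarrow> nat \<Rightarrow> ((nat \<Rightarrow> nat) \<Rightarrow> complex) \<Rightarrow> nat set \<Rightarrow> (nat \<Rightarrow> nat) \<Rightarrow> (nat \<Rightarrow> nat) \<Rightarrow> complex"
  where
  "reduced_state q n \<psi> S a b =
     (\<Sum>c \<in> labels q ({0..<n} - S). \<psi> (merge_lbl S a c) * cnj (\<psi> (merge_lbl S b c)))"

definition unit_state :: "nat \<Rightarrow> nat \<Rightarrow> ((nat \<Rightarrow> nat) \<Rightarrow> complex) \<Rightarrow> bool" where
  "unit_state q n \<psi> \<longleftrightarrow> (\<Sum>x \<in> labels q {0..<n}. (cmod (\<psi> x))\<^sup>2) = 1"

definition k_uniform :: "nat \<Rightarrow> nat \<Rightarrow> nat \<Rightarrow> ((nat \<Rightarrow> nat) \<Rightarrow> complex) \<Rightarrow> bool" where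
  "k_uniform q n k \<psi> \<longleftrightarrow> unit_state q n \<psi> \<and>
     (\<forall>S. S \<subseteq> {0..<n} \<and> card S = k \<longrightarrow>
        (\<forall>a \<in> labels q S. \<forall>b \<in> labels q S.
           reduced_state q n \<psi> S a b = (if a = b then 1 / of_nat (q ^ k) else 0)))"

definition AME_defect :: "nat \<Rightarrow> nat \<Rightarrow> nat \<Rightarrow> ((nat \<Rightarrow> nat) \<Rightarrow> complex) \<Rightarrow> bool" where
  "AME_defect q n l \<psi> \<longleftrightarrow> k_uniform q n (n div 2 - l) \<psi>"

end

theory Submission
  imports Defs
begin


lemma sum_swap3a: "(\<Sum>x\<in>A. \<Sum>y\<in>B. \<Sum>z\<in>C. g x y z) = (\<Sum>z\<in>C. \<Sum>x\<in>A. \<Sum>y\<in>B. g x y z)"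
proof -
  have "(\<Sum>x\<in>A. \<Sum>y\<in>B. \<Sum>z\<in>C. g x y z) = (\<Sum>x\<in>A. \<Sum>z\<in>C. \<Sum>y\<in>B. g x y z)"
    by (rule sum.cong[OF refl], rule sum.swap)
  also have "\<dots> = (\<Sum>z\<in>C. \<Sum>x\<in>A. \<Sum>y\<in>B. g x y z)" by (rule sum.swap)
  finally show ?thesis .
qed

lemma sum_swap3b: "(\<Sum>x\<in>A. \<Sum>y\<in>B. \<Sum>z\<in>C. g x y z) = (\<Sum>y\<in>B. \<Sum>z\<in>C. \<Sum>x\<in>A. g x y z)"
proof -
  have "(\<Sum>x\<in>A. \<Sum>y\<in>B. \<Sum>z\<in>C. g x y z) = (\<Sum>y\<in>B. \<Sum>x\<in>A. \<Sum>z\<in>C. g x y z)"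
    by (rule sum.swap)
  also have "\<dots> = (\<Sum>y\<in>B. \<Sum>z\<in>C. \<Sum>x\<in>A. g x y z)"
    by (rule sum.cong[OF refl], rule sum.swap)
  finally show ?thesis .
qed

lemma labels_finite: "finite A \<Longrightarrow> finite (labels q A)"
  by (simp add: labels_def finite_PiE)

lemma split_sum:
  assumes "finite A" "finite B" "A \<inter> B = {}"
  shows "(\<Sum>c\<in>labels q (A \<union> B). f c) = (\<Sum>d\<in>labels q A. \<Sum>e\<in>labels q B. f (merge_lbl A d e))"
proof -
  have bij: "bij_betw (\<lambda>(d,e). merge_lbl A d e) (labels q A \<times> labels q B) (labels q (A \<union> B))"
  proof (rule bij_betwI[where g="\<lambda>c. (restrict c A, restrict c B)"])
    show "(\<lambda>(d,e). merge_lbl A d e) \<in> labels q A \<times> labels q B \<rightarrow> labels q (A \<union> B)"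
      using assms(3) by (auto simp: labels_def merge_lbl_def PiE_def Pi_def extensional_def)
    show "(\<lambda>c. (restrict c A, restrict c B)) \<in> labels q (A \<union> B) \<rightarrow> labels q A \<times> labels q B"
      by (auto simp: labels_def)
    show "(\<lambda>c. (restrict c A, restrict c B)) ((\<lambda>(d,e). merge_lbl A d e) x) = x"
      if "x \<in> labels q A \<times> labels q B" for x
      using that assms(3)
      by (cases x) (auto simp: labels_def merge_lbl_def PiE_def extensional_def restrict_def fun_eq_iff)
    show "(\<lambda>(d,e). merge_lbl A d e) ((\<lambda>c. (restrict c A, restrict c B)) y) = y"
      if "y \<in> labels q (A \<union> B)" for y
      using that by (auto simp: labels_def merge_lbl_def PiE_def extensional_def restrict_def fun_eq_iff)
  qed
  have "(\<Sum>c\<in>labels q (A \<union> B). f c) = (\<Sum>x\<in>labels q A \<times> labels q B. f ((\<lambda>(d,e). merge_lbl A d e) x))"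
    using sum.reindex_bij_betw[OF bij, of f] by simp
  also have "\<dots> = (\<Sum>d\<in>labels q A. \<Sum>e\<in>labels q B. f (merge_lbl A d e))"
    by (simp add: sum.cartesian_product prod.case_distrib)
  finally show ?thesis .
qed

lemma insert_sum:
  assumes "finite A" "s \<notin> A"
  shows "(\<Sum>c\<in>labels q (insert s A). f c) = (\<Sum>\<alpha><q. \<Sum>d\<in>labels q A. f (d(s:=\<alpha>)))"
proof -
  have bij: "bij_betw (\<lambda>(\<alpha>,d). d(s:=\<alpha>)) ({..<q} \<times> labels q A) (labels q (insert s A))"
  proof (rule bij_betwI[where g="\<lambda>c. (c s, c(s:=undefined))"])
    show "(\<lambda>(\<alpha>,d). d(s:=\<alpha>)) \<in> {..<q} \<times> labels q A \<rightarrow> labels q (insert s A)"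
      using assms by (auto simp: labels_def PiE_def Pi_def extensional_def)
    show "(\<lambda>c. (c s, c(s:=undefined))) \<in> labels q (insert s A) \<rightarrow> {..<q} \<times> labels q A"
      using assms by (auto simp: labels_def PiE_def Pi_def extensional_def)
    show "(\<lambda>c. (c s, c(s:=undefined))) ((\<lambda>(\<alpha>,d). d(s:=\<alpha>)) x) = x"
      if "x \<in> {..<q} \<times> labels q A" for x
      using that assms by (cases x) (auto simp: labels_def PiE_def extensional_def fun_eq_iff)
    show "(\<lambda>(\<alpha>,d). d(s:=\<alpha>)) ((\<lambda>c. (c s, c(s:=undefined))) y) = y"
      if "y \<in> labels q (insert s A)" for y
      using that by (auto simp: fun_eq_iff)
  qed
  have "(\<Sum>c\<in>labels q (insert s A). f c) = (\<Sum>x\<in>{..<q} \<times> labels q A. f ((\<lambda>(\<alpha>,d). d(s:=\<alpha>)) x))"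
    using sum.reindex_bij_betw[OF bij, of f] by simp
  also have "\<dots> = (\<Sum>\<alpha><q. \<Sum>d\<in>labels q A. f (d(s:=\<alpha>)))"
    by (simp add: sum.cartesian_product prod.case_distrib)
  finally show ?thesis .
qed

lemma lagrange_real:
  fixes x :: "'i \<Rightarrow> real"
  assumes "finite I"
  shows "(\<Sum>i\<in>I. x i)\<^sup>2 = real (card I) * (\<Sum>i\<in>I. (x i)\<^sup>2) - (1/2) * (\<Sum>i\<in>I. \<Sum>j\<in>I. (x i - x j)\<^sup>2)"
proof -
  have "(\<Sum>i\<in>I. \<Sum>j\<in>I. (x i - x j)\<^sup>2) = (\<Sum>i\<in>I. \<Sum>j\<in>I. (x i)\<^sup>2 + (x j)\<^sup>2 - 2 * x i * x j)"
    by (simp add: power2_diff)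
  also have "\<dots> = 2 * real (card I) * (\<Sum>i\<in>I. (x i)\<^sup>2) - 2 * (\<Sum>i\<in>I. x i)\<^sup>2"
  proof -
    have sw: "(\<Sum>i\<in>I. \<Sum>j\<in>I. (x j)\<^sup>2) = (\<Sum>j\<in>I. \<Sum>i\<in>I. (x j)\<^sup>2)" by (rule sum.swap)
    have sq: "(\<Sum>i\<in>I. x i)\<^sup>2 = (\<Sum>i\<in>I. \<Sum>j\<in>I. x i * x j)"
      by (simp add: power2_eq_square sum_product)
    show ?thesis
      by (simp add: sum.distrib sum_subtractf sum_distrib_left[symmetric] sq sw mult.assoc)
  qed
  finally show ?thesis by linarith
qed

lemma lagrange_cmod:
  fixes u :: "'i \<Rightarrow> complex"
  assumes "finite I"
  shows "(cmod (\<Sum>i\<in>I. u i))\<^sup>2 = real (card I) * (\<Sum>i\<in>I. (cmod (u i))\<^sup>2) - (1/2) * (\<Sum>i\<in>I. \<Sum>j\<in>I. (cmod (u i - u j))\<^sup>2)"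
  using lagrange_real[OF assms, of "\<lambda>i. Re (u i)"] lagrange_real[OF assms, of "\<lambda>i. Im (u i)"]
  by (simp add: cmod_power2 Re_sum Im_sum sum.distrib algebra_simps sum_distrib_left)



definition ptr :: "nat \<Rightarrow> nat set \<Rightarrow> nat set \<Rightarrow> ((nat\<Rightarrow>nat)\<Rightarrow>(nat\<Rightarrow>nat)\<Rightarrow>complex) \<Rightarrow> (nat\<Rightarrow>nat)\<Rightarrow>(nat\<Rightarrow>nat)\<Rightarrow>complex" where
  "ptr q S T X a b = (\<Sum>d\<in>labels q (S - T). X (merge_lbl T a d) (merge_lbl T b d))"

definition NT :: "nat \<Rightarrow> nat set \<Rightarrow> nat set \<Rightarrow> ((nat\<Rightarrow>nat)\<Rightarrow>(nat\<Rightarrow>nat)\<Rightarrow>complex) \<Rightarrow> real" where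
  "NT q S T X = (\<Sum>a\<in>labels q T. \<Sum>b\<in>labels q T. (cmod (ptr q S T X a b))\<^sup>2)"

definition Qf :: "nat \<Rightarrow> nat set \<Rightarrow> ((nat\<Rightarrow>nat)\<Rightarrow>(nat\<Rightarrow>nat)\<Rightarrow>complex) \<Rightarrow> real" where
  "Qf q S X = (\<Sum>T\<in>Pow S. (-1) ^ card (S - T) * real q ^ card T * NT q S T X)"

lemma NT_nonneg: "0 \<le> NT q S T X"
  unfolding NT_def by (intro sum_nonneg) auto

lemma ptr_sum: "ptr q S T (\<lambda>a b. \<Sum>\<alpha>\<in>I. Y \<alpha> a b) a b = (\<Sum>\<alpha>\<in>I. ptr q S T (Y \<alpha>) a b)"
  unfolding ptr_def by (rule sum.swap)

lemma ptr_diff: "ptr q S T (\<lambda>a b. Y a b - Z a b) a b = ptr q S T Y a b - ptr q S T Z a b"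
  unfolding ptr_def by (simp add: sum_subtractf)

lemma NT_lagrange:
  assumes "finite I"
  shows "NT q S T (\<lambda>a b. \<Sum>\<alpha>\<in>I. Y \<alpha> a b) = real (card I) * (\<Sum>\<alpha>\<in>I. NT q S T (Y \<alpha>))
     - (1/2) * (\<Sum>\<alpha>\<in>I. \<Sum>\<beta>\<in>I. NT q S T (\<lambda>a b. Y \<alpha> a b - Y \<beta> a b))"
proof -
  let ?L = "labels q T"
  let ?p = "\<lambda>\<alpha> a b. ptr q S T (Y \<alpha>) a b"
  have swap3: "(\<Sum>a\<in>?L. \<Sum>b\<in>?L. \<Sum>\<alpha>\<in>I. g a b \<alpha>) = (\<Sum>\<alpha>\<in>I. \<Sum>a\<in>?L. \<Sum>b\<in>?L. g a b \<alpha>)"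
    for g :: "_ \<Rightarrow> _ \<Rightarrow> _ \<Rightarrow> real"
  proof -
    have "(\<Sum>a\<in>?L. \<Sum>b\<in>?L. \<Sum>\<alpha>\<in>I. g a b \<alpha>) = (\<Sum>a\<in>?L. \<Sum>\<alpha>\<in>I. \<Sum>b\<in>?L. g a b \<alpha>)"
      by (rule sum.cong[OF refl], rule sum.swap)
    also have "\<dots> = (\<Sum>\<alpha>\<in>I. \<Sum>a\<in>?L. \<Sum>b\<in>?L. g a b \<alpha>)" by (rule sum.swap)
    finally show ?thesis .
  qed
  have "NT q S T (\<lambda>a b. \<Sum>\<alpha>\<in>I. Y \<alpha> a b) = (\<Sum>a\<in>?L. \<Sum>b\<in>?L. (cmod (\<Sum>\<alpha>\<in>I. ?p \<alpha> a b))\<^sup>2)"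
    unfolding NT_def ptr_sum ..
  also have "\<dots> = (\<Sum>a\<in>?L. \<Sum>b\<in>?L. real (card I) * (\<Sum>\<alpha>\<in>I. (cmod (?p \<alpha> a b))\<^sup>2)
       - (1/2) * (\<Sum>\<alpha>\<in>I. \<Sum>\<beta>\<in>I. (cmod (?p \<alpha> a b - ?p \<beta> a b))\<^sup>2))"
    by (simp only: lagrange_cmod[OF assms])
  also have "\<dots> = real (card I) * (\<Sum>a\<in>?L. \<Sum>b\<in>?L. \<Sum>\<alpha>\<in>I. (cmod (?p \<alpha> a b))\<^sup>2)
       - (1/2) * (\<Sum>a\<in>?L. \<Sum>b\<in>?L. \<Sum>\<alpha>\<in>I. \<Sum>\<beta>\<in>I. (cmod (?p \<alpha> a b - ?p \<beta> a b))\<^sup>2)"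
    by (simp only: sum_subtractf sum_distrib_left)
  also have "\<dots> = real (card I) * (\<Sum>\<alpha>\<in>I. \<Sum>a\<in>?L. \<Sum>b\<in>?L. (cmod (?p \<alpha> a b))\<^sup>2)
       - (1/2) * (\<Sum>\<alpha>\<in>I. \<Sum>a\<in>?L. \<Sum>b\<in>?L. \<Sum>\<beta>\<in>I. (cmod (?p \<alpha> a b - ?p \<beta> a b))\<^sup>2)"
    by (simp only: swap3)
  also have "\<dots> = real (card I) * (\<Sum>\<alpha>\<in>I. \<Sum>a\<in>?L. \<Sum>b\<in>?L. (cmod (?p \<alpha> a b))\<^sup>2)
       - (1/2) * (\<Sum>\<alpha>\<in>I. \<Sum>\<beta>\<in>I. \<Sum>a\<in>?L. \<Sum>b\<in>?L. (cmod (?p \<alpha> a b - ?p \<beta> a b))\<^sup>2)"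
    by (simp only: swap3)
  finally show ?thesis unfolding NT_def ptr_diff .
qed

lemma Qf_lagrange:
  assumes "finite I"
  shows "Qf q S (\<lambda>a b. \<Sum>\<alpha>\<in>I. Y \<alpha> a b) = real (card I) * (\<Sum>\<alpha>\<in>I. Qf q S (Y \<alpha>))
     - (1/2) * (\<Sum>\<alpha>\<in>I. \<Sum>\<beta>\<in>I. Qf q S (\<lambda>a b. Y \<alpha> a b - Y \<beta> a b))"
proof -
  let ?c = "\<lambda>T. (-1::real) ^ card (S - T) * real q ^ card T"
  have "Qf q S (\<lambda>a b. \<Sum>\<alpha>\<in>I. Y \<alpha> a b) = (\<Sum>T\<in>Pow S. ?c T * (real (card I) * (\<Sum>\<alpha>\<in>I. NT q S T (Y \<alpha>))
     - (1/2) * (\<Sum>\<alpha>\<in>I. \<Sum>\<beta>\<in>I. NT q S T (\<lambda>a b. Y \<alpha> a b - Y \<beta> a b))))"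
    unfolding Qf_def NT_lagrange[OF assms] ..
  also have "\<dots> = real (card I) * (\<Sum>T\<in>Pow S. \<Sum>\<alpha>\<in>I. ?c T * NT q S T (Y \<alpha>))
     - (1/2) * (\<Sum>T\<in>Pow S. \<Sum>\<alpha>\<in>I. \<Sum>\<beta>\<in>I. ?c T * NT q S T (\<lambda>a b. Y \<alpha> a b - Y \<beta> a b))"
    by (simp only: right_diff_distrib sum_subtractf sum_distrib_left mult.left_commute)
  also have "\<dots> = real (card I) * (\<Sum>\<alpha>\<in>I. \<Sum>T\<in>Pow S. ?c T * NT q S T (Y \<alpha>))
     - (1/2) * (\<Sum>\<alpha>\<in>I. \<Sum>\<beta>\<in>I. \<Sum>T\<in>Pow S. ?c T * NT q S T (\<lambda>a b. Y \<alpha> a b - Y \<beta> a b))"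
  proof -
    have h1: "(\<Sum>T\<in>Pow S. \<Sum>\<alpha>\<in>I. ?c T * NT q S T (Y \<alpha>)) = (\<Sum>\<alpha>\<in>I. \<Sum>T\<in>Pow S. ?c T * NT q S T (Y \<alpha>))"
      by (rule sum.swap)
    have h2: "(\<Sum>T\<in>Pow S. \<Sum>\<alpha>\<in>I. \<Sum>\<beta>\<in>I. ?c T * NT q S T (\<lambda>a b. Y \<alpha> a b - Y \<beta> a b))
       = (\<Sum>\<alpha>\<in>I. \<Sum>\<beta>\<in>I. \<Sum>T\<in>Pow S. ?c T * NT q S T (\<lambda>a b. Y \<alpha> a b - Y \<beta> a b))"
      by (rule sum_swap3b)
    show ?thesis unfolding h1 h2 ..
  qed
  finally show ?thesis unfolding Qf_def .
qed



lemma merge_upd_ins: "merge_lbl (insert s T) (a(s:=\<alpha>)) d = (merge_lbl T a d)(s:=\<alpha>)"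
  by (auto simp: merge_lbl_def fun_eq_iff)

lemma merge_upd_out: "s \<notin> T \<Longrightarrow> merge_lbl T a (d(s:=\<alpha>)) = (merge_lbl T a d)(s:=\<alpha>)"
  by (auto simp: merge_lbl_def fun_eq_iff)

lemma L1:
  assumes "s \<notin> S" "T \<subseteq> S"
  shows "ptr q (insert s S) (insert s T) X (a(s:=\<alpha>)) (b(s:=\<beta>)) = ptr q S T (\<lambda>a b. X (a(s:=\<alpha>)) (b(s:=\<beta>))) a b"
proof -
  have "insert s S - insert s T = S - T" using assms by auto
  then show ?thesis unfolding ptr_def merge_upd_ins by simp
qed

lemma L2:
  assumes "finite S" "s \<notin> S" "T \<subseteq> S"
  shows "NT q (insert s S) (insert s T) X = (\<Sum>\<alpha><q. \<Sum>\<beta><q. NT q S T (\<lambda>a b. X (a(s:=\<alpha>)) (b(s:=\<beta>))))"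
proof -
  have fT: "finite T" "s \<notin> T" using assms finite_subset by auto
  have "NT q (insert s S) (insert s T) X = (\<Sum>\<alpha><q. \<Sum>a\<in>labels q T. \<Sum>\<beta><q. \<Sum>b\<in>labels q T.
           (cmod (ptr q (insert s S) (insert s T) X (a(s:=\<alpha>)) (b(s:=\<beta>))))\<^sup>2)"
    unfolding NT_def insert_sum[OF fT] ..
  also have "\<dots> = (\<Sum>\<alpha><q. \<Sum>a\<in>labels q T. \<Sum>\<beta><q. \<Sum>b\<in>labels q T.
           (cmod (ptr q S T (\<lambda>a b. X (a(s:=\<alpha>)) (b(s:=\<beta>))) a b))\<^sup>2)"
    by (simp only: L1[OF assms(2) assms(3)])
  also have "\<dots> = (\<Sum>\<alpha><q. \<Sum>\<beta><q. \<Sum>a\<in>labels q T. \<Sum>b\<in>labels q T.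
           (cmod (ptr q S T (\<lambda>a b. X (a(s:=\<alpha>)) (b(s:=\<beta>))) a b))\<^sup>2)"
    by (rule sum.cong[OF refl], rule sum.swap)
  finally show ?thesis unfolding NT_def .
qed

lemma L3:
  assumes "finite S" "s \<notin> S" "T \<subseteq> S"
  shows "ptr q (insert s S) T X a b = ptr q S T (\<lambda>a b. \<Sum>\<alpha><q. X (a(s:=\<alpha>)) (b(s:=\<alpha>))) a b"
proof -
  have e: "insert s S - T = insert s (S - T)" and sT: "s \<notin> T" and f: "finite (S - T)" "s \<notin> S - T"
    using assms by auto
  have "ptr q (insert s S) T X a b = (\<Sum>\<alpha><q. \<Sum>d\<in>labels q (S - T). X ((merge_lbl T a d)(s:=\<alpha>)) ((merge_lbl T b d)(s:=\<alpha>)))"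
    unfolding ptr_def e insert_sum[OF f] merge_upd_out[OF sT] ..
  also have "\<dots> = ptr q S T (\<lambda>a b. \<Sum>\<alpha><q. X (a(s:=\<alpha>)) (b(s:=\<alpha>))) a b"
    unfolding ptr_def by (rule sum.swap)
  finally show ?thesis .
qed

lemma L4:
  assumes "finite S" "s \<notin> S" "T \<subseteq> S"
  shows "NT q (insert s S) T X = NT q S T (\<lambda>a b. \<Sum>\<alpha><q. X (a(s:=\<alpha>)) (b(s:=\<alpha>)))"
  unfolding NT_def L3[OF assms] ..

lemma Qf_insert:
  assumes "finite S" "s \<notin> S"
  shows "Qf q (insert s S) X = real q * (\<Sum>\<alpha><q. \<Sum>\<beta><q. Qf q S (\<lambda>a b. X (a(s:=\<alpha>)) (b(s:=\<beta>))))
           - Qf q S (\<lambda>a b. \<Sum>\<alpha><q. X (a(s:=\<alpha>)) (b(s:=\<alpha>)))"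
proof -
  let ?Z = "\<lambda>a b. \<Sum>\<alpha><q. X (a(s:=\<alpha>)) (b(s:=\<alpha>))"
  let ?Xab = "\<lambda>\<alpha> \<beta> a b. X (a(s:=\<alpha>)) (b(s:=\<beta>))"
  let ?f = "\<lambda>T. (-1::real) ^ card (insert s S - T) * real q ^ card T * NT q (insert s S) T X"
  have disj: "Pow S \<inter> insert s ` Pow S = {}" using assms by auto
  have inj: "inj_on (insert s) (Pow S)" using assms by (auto simp: inj_on_def)
  have fin: "finite (Pow S)" "finite (insert s ` Pow S)" using assms by auto
  have "Qf q (insert s S) X = sum ?f (Pow S) + sum ?f (insert s ` Pow S)"
    unfolding Qf_def Pow_insert by (rule sum.union_disjoint[OF fin disj])
  also have "sum ?f (insert s ` Pow S) = sum (?f \<circ> insert s) (Pow S)"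
    by (rule sum.reindex[OF inj])
  also have "\<dots> = (\<Sum>T\<in>Pow S. (-1::real) ^ card (S - T) * real q ^ card T *
         (real q * (\<Sum>\<alpha><q. \<Sum>\<beta><q. NT q S T (?Xab \<alpha> \<beta>))))"
  proof (rule sum.cong[OF refl])
    fix T assume T: "T \<in> Pow S"
    then have "T \<subseteq> S" "finite T" "s \<notin> T" using assms finite_subset by auto
    moreover have "insert s S - insert s T = S - T" using assms by auto
    ultimately show "(?f \<circ> insert s) T = (-1::real) ^ card (S - T) * real q ^ card T *
         (real q * (\<Sum>\<alpha><q. \<Sum>\<beta><q. NT q S T (?Xab \<alpha> \<beta>)))"
      using L2[OF assms] by simp
  qed
  also have "sum ?f (Pow S) = (\<Sum>T\<in>Pow S. - ((-1::real) ^ card (S - T) * real q ^ card T * NT q S T ?Z))"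
  proof (rule sum.cong[OF refl])
    fix T assume T: "T \<in> Pow S"
    then have "T \<subseteq> S" "finite (S - T)" "s \<notin> S - T" using assms finite_subset by auto
    moreover have "insert s S - T = insert s (S - T)" using assms T by auto
    ultimately show "?f T = - ((-1::real) ^ card (S - T) * real q ^ card T * NT q S T ?Z)"
      using L4[OF assms] by simp
  qed
  finally have main: "Qf q (insert s S) X = (\<Sum>T\<in>Pow S. - ((-1::real) ^ card (S - T) * real q ^ card T * NT q S T ?Z))
     + (\<Sum>T\<in>Pow S. (-1::real) ^ card (S - T) * real q ^ card T *
         (real q * (\<Sum>\<alpha><q. \<Sum>\<beta><q. NT q S T (?Xab \<alpha> \<beta>))))" .
  have B: "(\<Sum>T\<in>Pow S. - ((-1::real) ^ card (S - T) * real q ^ card T * NT q S T ?Z)) = - Qf q S ?Z"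
    unfolding Qf_def by (simp add: sum_negf)
  have "(\<Sum>T\<in>Pow S. (-1::real) ^ card (S - T) * real q ^ card T *
         (real q * (\<Sum>\<alpha><q. \<Sum>\<beta><q. NT q S T (?Xab \<alpha> \<beta>))))
      = (\<Sum>T\<in>Pow S. \<Sum>\<alpha><q. \<Sum>\<beta><q. real q * ((-1::real) ^ card (S - T) * real q ^ card T * NT q S T (?Xab \<alpha> \<beta>)))"
    by (simp add: sum_distrib_left mult_ac)
  also have "\<dots> = (\<Sum>\<alpha><q. \<Sum>\<beta><q. \<Sum>T\<in>Pow S. real q * ((-1::real) ^ card (S - T) * real q ^ card T * NT q S T (?Xab \<alpha> \<beta>)))"
    by (rule sum_swap3b)
  also have "\<dots> = real q * (\<Sum>\<alpha><q. \<Sum>\<beta><q. Qf q S (?Xab \<alpha> \<beta>))"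
    unfolding Qf_def by (simp add: sum_distrib_left)
  finally have A: "(\<Sum>T\<in>Pow S. (-1::real) ^ card (S - T) * real q ^ card T *
         (real q * (\<Sum>\<alpha><q. \<Sum>\<beta><q. NT q S T (?Xab \<alpha> \<beta>)))) = real q * (\<Sum>\<alpha><q. \<Sum>\<beta><q. Qf q S (?Xab \<alpha> \<beta>))" .
  show ?thesis using main A B by linarith
qed

lemma Qf_nonneg:
  assumes "finite S"
  shows "0 \<le> Qf q S X"
  using assms
proof (induction S arbitrary: X rule: finite_induct)
  case empty
  then show ?case by (simp add: Qf_def NT_nonneg)
next
  case (insert s S)
  let ?Xab = "\<lambda>\<alpha> \<beta> a b. X (a(s:=\<alpha>)) (b(s:=\<beta>))"
  have lag: "Qf q S (\<lambda>a b. \<Sum>\<alpha><q. ?Xab \<alpha> \<alpha> a b) = real q * (\<Sum>\<alpha><q. Qf q S (?Xab \<alpha> \<alpha>))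
     - (1/2) * (\<Sum>\<alpha><q. \<Sum>\<beta><q. Qf q S (\<lambda>a b. ?Xab \<alpha> \<alpha> a b - ?Xab \<beta> \<beta> a b))"
    using Qf_lagrange[of "{..<q}" q S "\<lambda>\<alpha>. ?Xab \<alpha> \<alpha>"] by simp
  have d: "0 \<le> (\<Sum>\<alpha><q. \<Sum>\<beta><q. Qf q S (\<lambda>a b. ?Xab \<alpha> \<alpha> a b - ?Xab \<beta> \<beta> a b))"
    by (intro sum_nonneg insert.IH)
  have e: "(\<Sum>\<alpha><q. Qf q S (?Xab \<alpha> \<alpha>)) \<le> (\<Sum>\<alpha><q. \<Sum>\<beta><q. Qf q S (?Xab \<alpha> \<beta>))"
  proof (rule sum_mono)
    fix \<alpha> assume "\<alpha> \<in> {..<q}"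
    then show "Qf q S (?Xab \<alpha> \<alpha>) \<le> (\<Sum>\<beta><q. Qf q S (?Xab \<alpha> \<beta>))"
      using member_le_sum[of \<alpha> "{..<q}" "\<lambda>\<beta>. Qf q S (?Xab \<alpha> \<beta>)"] insert.IH by auto
  qed
  have "real q * (\<Sum>\<alpha><q. Qf q S (?Xab \<alpha> \<alpha>)) \<le> real q * (\<Sum>\<alpha><q. \<Sum>\<beta><q. Qf q S (?Xab \<alpha> \<beta>))"
    using e by (simp add: mult_left_mono)
  then show ?case
    unfolding Qf_insert[OF insert.hyps] lag using d by linarith
qed



definition Pur :: "nat \<Rightarrow> nat \<Rightarrow> ((nat \<Rightarrow> nat) \<Rightarrow> complex) \<Rightarrow> nat set \<Rightarrow> real" where
  "Pur q n \<psi> T = (\<Sum>a\<in>labels q T. \<Sum>b\<in>labels q T. (cmod (reduced_state q n \<psi> T a b))\<^sup>2)"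

lemma merge_nested: "T \<subseteq> S \<Longrightarrow> merge_lbl T a (merge_lbl (S - T) d e) = merge_lbl S (merge_lbl T a d) e"
  by (auto simp: merge_lbl_def fun_eq_iff)

lemma rs_ptr:
  assumes "T \<subseteq> S" "S \<subseteq> {0..<n}"
  shows "reduced_state q n \<psi> T a b = ptr q S T (reduced_state q n \<psi> S) a b"
proof -
  have e: "{0..<n} - T = (S - T) \<union> ({0..<n} - S)" using assms by auto
  have "finite S" using assms(2) finite_subset by blast
  then have f: "finite (S - T)" "finite ({0..<n} - S)" "(S - T) \<inter> ({0..<n} - S) = {}"
    by auto
  show ?thesis
    unfolding reduced_state_def ptr_def e split_sum[OF f] merge_nested[OF assms(1)] ..
qed

lemma sector_nonneg:
  assumes "S \<subseteq> {0..<n}"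
  shows "0 \<le> (\<Sum>T\<in>Pow S. (-1::real) ^ card (S - T) * real q ^ card T * Pur q n \<psi> T)"
proof -
  have "(\<Sum>T\<in>Pow S. (-1::real) ^ card (S - T) * real q ^ card T * Pur q n \<psi> T) = Qf q S (reduced_state q n \<psi> S)"
    unfolding Qf_def
  proof (rule sum.cong[OF refl])
    fix T assume "T \<in> Pow S"
    then have "T \<subseteq> S" by auto
    then show "(-1::real) ^ card (S - T) * real q ^ card T * Pur q n \<psi> T =
       (-1) ^ card (S - T) * real q ^ card T * NT q S T (reduced_state q n \<psi> S)"
      unfolding Pur_def NT_def rs_ptr[OF \<open>T \<subseteq> S\<close> assms] by simp
  qed
  also have "0 \<le> \<dots>" by (rule Qf_nonneg) (use assms finite_subset in auto)
  finally show ?thesis by simp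
qed

lemma sum_swap4: "(\<Sum>a\<in>A. \<Sum>b\<in>B. \<Sum>c\<in>C. \<Sum>d\<in>D. g a b c d) = (\<Sum>c\<in>C. \<Sum>d\<in>D. \<Sum>a\<in>A. \<Sum>b\<in>B. g a b c d)"
proof -
  have "(\<Sum>a\<in>A. \<Sum>b\<in>B. \<Sum>c\<in>C. \<Sum>d\<in>D. g a b c d) = (\<Sum>a\<in>A. \<Sum>c\<in>C. \<Sum>d\<in>D. \<Sum>b\<in>B. g a b c d)"
    by (rule sum.cong[OF refl], rule sum_swap3b)
  also have "\<dots> = (\<Sum>c\<in>C. \<Sum>d\<in>D. \<Sum>a\<in>A. \<Sum>b\<in>B. g a b c d)" by (rule sum_swap3b)
  finally show ?thesis .
qed

lemma sum_rev4: "(\<Sum>a\<in>A. \<Sum>b\<in>B. \<Sum>c\<in>C. \<Sum>d\<in>D. g a b c d) = (\<Sum>d\<in>D. \<Sum>c\<in>C. \<Sum>b\<in>B. \<Sum>a\<in>A. g a b c d)"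
proof -
  have "(\<Sum>a\<in>A. \<Sum>b\<in>B. \<Sum>c\<in>C. \<Sum>d\<in>D. g a b c d) = (\<Sum>c\<in>C. \<Sum>d\<in>D. \<Sum>a\<in>A. \<Sum>b\<in>B. g a b c d)"
    by (rule sum_swap4)
  also have "\<dots> = (\<Sum>c\<in>C. \<Sum>d\<in>D. \<Sum>b\<in>B. \<Sum>a\<in>A. g a b c d)"
    by (intro sum.cong refl sum.swap)
  also have "\<dots> = (\<Sum>d\<in>D. \<Sum>c\<in>C. \<Sum>b\<in>B. \<Sum>a\<in>A. g a b c d)"
    by (rule sum.swap)
  finally show ?thesis .
qed

lemma Pur_complex:
  "complex_of_real (Pur q n \<psi> T) = (\<Sum>a\<in>labels q T. \<Sum>b\<in>labels q T. \<Sum>c'\<in>labels q ({0..<n} - T). \<Sum>c\<in>labels q ({0..<n} - T).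
     \<psi> (merge_lbl T a c) * cnj (\<psi> (merge_lbl T b c)) * cnj (\<psi> (merge_lbl T a c')) * \<psi> (merge_lbl T b c'))"
  unfolding Pur_def reduced_state_def of_real_sum complex_norm_square
  by (simp add: sum_product sum_distrib_left mult_ac cnj_sum)

lemma Pur_compl:
  assumes "T \<subseteq> {0..<n}"
  shows "Pur q n \<psi> ({0..<n} - T) = Pur q n \<psi> T"
proof -
  let ?U = "{0..<n}"
  have UU: "?U - (?U - T) = T" using assms by auto
  have mm: "merge_lbl (?U - T) c a = merge_lbl T a c" if "a \<in> labels q T" "c \<in> labels q (?U - T)" for a c
    using that assms by (auto simp: merge_lbl_def fun_eq_iff labels_def PiE_def extensional_def)
  have "complex_of_real (Pur q n \<psi> (?U - T)) = (\<Sum>c\<in>labels q (?U - T). \<Sum>c'\<in>labels q (?U - T). \<Sum>b\<in>labels q T. \<Sum>a\<in>labels q T.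
     \<psi> (merge_lbl (?U - T) c a) * cnj (\<psi> (merge_lbl (?U - T) c' a)) * cnj (\<psi> (merge_lbl (?U - T) c b)) * \<psi> (merge_lbl (?U - T) c' b))"
    unfolding Pur_complex UU ..
  also have "\<dots> = (\<Sum>c\<in>labels q (?U - T). \<Sum>c'\<in>labels q (?U - T). \<Sum>b\<in>labels q T. \<Sum>a\<in>labels q T.
     \<psi> (merge_lbl T a c) * cnj (\<psi> (merge_lbl T b c)) * cnj (\<psi> (merge_lbl T a c')) * \<psi> (merge_lbl T b c'))"
    by (intro sum.cong refl) (simp add: mm mult_ac)
  also have "\<dots> = complex_of_real (Pur q n \<psi> T)"
    unfolding Pur_complex by (rule sum_rev4)
  finally show ?thesis by simp
qed

lemma card_labels: "finite A \<Longrightarrow> card (labels q A) = q ^ card A"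
  by (simp add: labels_def card_PiE)

lemma Pur_uniform:
  assumes ku: "k_uniform q n k \<psi>" and T: "T \<subseteq> {0..<n}" "card T \<le> k" and kn: "k \<le> n" and q: "q > 0"
  shows "Pur q n \<psi> T = 1 / real q ^ card T"
proof -
  let ?U = "{0..<n}"
  have "k - card T \<le> card (?U - T)" using T kn by (simp add: card_Diff_subset finite_subset)
  then obtain R where R: "R \<subseteq> ?U - T" "card R = k - card T" "finite R"
    by (rule obtain_subset_with_card_n)
  define S where "S = T \<union> R"
  have fT: "finite T" using T finite_subset by auto
  have TS: "T \<subseteq> S" and SU: "S \<subseteq> ?U" using R T by (auto simp: S_def)
  have cS: "card S = k" unfolding S_def using R T fT
    by (subst card_Un_disjoint) auto
  have SmT: "S - T = R" using R by (auto simp: S_def)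
  have rsS: "reduced_state q n \<psi> S a b = (if a = b then 1 / of_nat (q ^ k) else 0)"
    if "a \<in> labels q S" "b \<in> labels q S" for a b
    using ku SU cS that unfolding k_uniform_def by blast
  have rsT: "reduced_state q n \<psi> T a b = (if a = b then 1 / of_nat (q ^ card T) else 0)"
    if a: "a \<in> labels q T" and b: "b \<in> labels q T" for a b
  proof -
    have mem: "merge_lbl T x d \<in> labels q S" if "x \<in> labels q T" "d \<in> labels q R" for x d
      using that R by (auto simp: labels_def merge_lbl_def PiE_def Pi_def extensional_def S_def)
    have eq: "(merge_lbl T a d = merge_lbl T b d) \<longleftrightarrow> a = b" if "d \<in> labels q R" for d
    proof
      assume h: "merge_lbl T a d = merge_lbl T b d"
      show "a = b"
      proof
        fix i show "a i = b i"
          using fun_cong[OF h, of i] a b by (cases "i \<in> T") (auto simp: merge_lbl_def labels_def PiE_def extensional_def)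
      qed
    qed simp
    have "reduced_state q n \<psi> T a b = (\<Sum>d\<in>labels q R. reduced_state q n \<psi> S (merge_lbl T a d) (merge_lbl T b d))"
      unfolding rs_ptr[OF TS SU, of q \<psi> a b] ptr_def SmT ..
    also have "\<dots> = (\<Sum>d\<in>labels q R. if a = b then 1 / of_nat (q ^ k) else 0)"
      by (rule sum.cong[OF refl]) (simp add: rsS mem a b eq)
    also have "\<dots> = (if a = b then of_nat (q ^ (k - card T)) / of_nat (q ^ k) else 0)"
      using card_labels[OF R(3), of q] R(2) by simp
    also have "\<dots> = (if a = b then 1 / of_nat (q ^ card T) else 0)"
    proof -
      have "q ^ k = q ^ (k - card T) * q ^ card T" using T by (simp add: power_add[symmetric])
      then show ?thesis using q by (simp add: field_simps)
    qed
    finally show ?thesis .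
  qed
  have "Pur q n \<psi> T = (\<Sum>a\<in>labels q T. \<Sum>b\<in>labels q T. if a = b then (1 / real q ^ card T)\<^sup>2 else 0)"
    unfolding Pur_def by (intro sum.cong refl) (simp add: rsT norm_divide norm_power)
  also have "\<dots> = real (q ^ card T) * (1 / real q ^ card T)\<^sup>2"
    using labels_finite[OF fT, of q] card_labels[OF fT, of q] by (simp add: sum.delta)
  also have "\<dots> = 1 / real q ^ card T" using q by (simp add: power2_eq_square field_simps)
  finally show ?thesis .
qed



definition PP :: "nat \<Rightarrow> nat \<Rightarrow> ((nat \<Rightarrow> nat) \<Rightarrow> complex) \<Rightarrow> nat \<Rightarrow> real" where
  "PP q n \<psi> i = (\<Sum>T\<in>{T. T \<subseteq> {0..<n} \<and> card T = i}. Pur q n \<psi> T)"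

lemma card_supersets:
  assumes U: "finite U" and T: "T \<subseteq> U" and j: "card T \<le> j"
  shows "card {S. (S \<subseteq> U \<and> card S = j) \<and> T \<subseteq> S} = (card U - card T) choose (j - card T)"
proof -
  have fT: "finite T" using T U finite_subset by auto
  have bij: "bij_betw (\<lambda>S. S - T) {S. (S \<subseteq> U \<and> card S = j) \<and> T \<subseteq> S} {R. R \<subseteq> U - T \<and> card R = j - card T}"
  proof (rule bij_betwI[where g="\<lambda>R. R \<union> T"])
    show "(\<lambda>S. S - T) \<in> {S. (S \<subseteq> U \<and> card S = j) \<and> T \<subseteq> S} \<rightarrow> {R. R \<subseteq> U - T \<and> card R = j - card T}"
      using fT by (auto simp: card_Diff_subset)
    show "(\<lambda>R. R \<union> T) \<in> {R. R \<subseteq> U - T \<and> card R = j - card T} \<rightarrow> {S. (S \<subseteq> U \<and> card S = j) \<and> T \<subseteq> S}"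
    proof
      fix R assume R: "R \<in> {R. R \<subseteq> U - T \<and> card R = j - card T}"
      then have "finite R" using U finite_subset by blast
      then have "card (R \<union> T) = card R + card T" using R fT by (subst card_Un_disjoint) auto
      then show "R \<union> T \<in> {S. (S \<subseteq> U \<and> card S = j) \<and> T \<subseteq> S}" using R T j by auto
    qed
    show "x - T \<union> T = x" if "x \<in> {S. (S \<subseteq> U \<and> card S = j) \<and> T \<subseteq> S}" for x using that by auto
    show "y \<union> T - T = y" if "y \<in> {R. R \<subseteq> U - T \<and> card R = j - card T}" for y using that by auto
  qed
  have "card {S. (S \<subseteq> U \<and> card S = j) \<and> T \<subseteq> S} = card {R. R \<subseteq> U - T \<and> card R = j - card T}"
    by (rule bij_betw_same_card[OF bij])
  also have "\<dots> = card (U - T) choose (j - card T)" using U by (simp add: n_subsets)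
  finally show ?thesis using T fT by (simp add: card_Diff_subset)
qed

lemma card_supersets0:
  assumes U: "finite U" and j: "\<not> card T \<le> j"
  shows "{S. (S \<subseteq> U \<and> card S = j) \<and> T \<subseteq> S} = {}"
proof -
  have "False" if "S \<subseteq> U" "card S = j" "T \<subseteq> S" for S
    using card_mono[of S T] that U finite_subset j by auto
  then show ?thesis by blast
qed

lemma Aj_nonneg:
  assumes jn: "j \<le> n"
  shows "0 \<le> (\<Sum>i\<le>j. (-1::real) ^ (j - i) * real ((n - i) choose (j - i)) * real q ^ i * PP q n \<psi> i)"
proof -
  let ?U = "{0..<n}"
  let ?Sj = "{S. S \<subseteq> ?U \<and> card S = j}"
  let ?h = "\<lambda>T. (-1::real) ^ (j - card T) * real q ^ card T * Pur q n \<psi> T"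
  let ?G = "\<lambda>i. (if i \<le> j then real ((n - i) choose (j - i)) else 0) * ((-1::real) ^ (j - i) * real q ^ i)"
  have finSj: "finite ?Sj" by (rule finite_subset[of _ "Pow ?U"]) auto
  have "0 \<le> (\<Sum>S\<in>?Sj. \<Sum>T\<in>Pow S. (-1::real) ^ card (S - T) * real q ^ card T * Pur q n \<psi> T)"
    by (intro sum_nonneg sector_nonneg) auto
  also have "\<dots> = (\<Sum>S\<in>?Sj. \<Sum>T\<in>{T. T \<in> Pow ?U \<and> T \<subseteq> S}. ?h T)"
  proof (rule sum.cong[OF refl])
    fix S assume S: "S \<in> ?Sj"
    have "Pow S = {T. T \<in> Pow ?U \<and> T \<subseteq> S}" using S by auto
    moreover have "card (S - T) = j - card T" if "T \<subseteq> S" for T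
      using S that finite_subset[of T ?U] by (auto simp: card_Diff_subset)
    ultimately show "(\<Sum>T\<in>Pow S. (-1::real) ^ card (S - T) * real q ^ card T * Pur q n \<psi> T) =
       (\<Sum>T\<in>{T. T \<in> Pow ?U \<and> T \<subseteq> S}. ?h T)"
      by (intro sum.cong) auto
  qed
  also have "\<dots> = (\<Sum>T\<in>Pow ?U. \<Sum>S\<in>{S. S \<in> ?Sj \<and> T \<subseteq> S}. ?h T)"
    by (rule sum.swap_restrict[OF finSj]) auto
  also have "\<dots> = (\<Sum>T\<in>Pow ?U. ?G (card T) * Pur q n \<psi> T)"
  proof (rule sum.cong[OF refl])
    fix T assume T: "T \<in> Pow ?U"
    show "(\<Sum>S\<in>{S. S \<in> ?Sj \<and> T \<subseteq> S}. ?h T) = ?G (card T) * Pur q n \<psi> T"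
    proof (cases "card T \<le> j")
      case True
      then show ?thesis using card_supersets[of ?U T j] T by simp
    next
      case False
      then show ?thesis using card_supersets0[of ?U T j] by simp
    qed
  qed
  also have "\<dots> = (\<Sum>i\<le>n. \<Sum>T\<in>{T. T \<in> Pow ?U \<and> card T = i}. ?G (card T) * Pur q n \<psi> T)"
    by (rule sum.group[symmetric]) (auto intro: card_mono[of ?U, simplified])
  also have "\<dots> = (\<Sum>i\<le>n. ?G i * PP q n \<psi> i)"
    unfolding PP_def by (intro sum.cong refl) (auto simp: sum_distrib_left intro!: sum.cong)
  also have "\<dots> = (\<Sum>i\<le>j. ?G i * PP q n \<psi> i)"
    by (rule sum.mono_neutral_right) (use jn in auto)
  also have "\<dots> = (\<Sum>i\<le>j. (-1::real) ^ (j - i) * real ((n - i) choose (j - i)) * real q ^ i * PP q n \<psi> i)"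
    by (intro sum.cong refl) auto
  finally show ?thesis .
qed

lemma PP_low:
  assumes "k_uniform q n k \<psi>" "i \<le> k" "k \<le> n" "q > 0"
  shows "PP q n \<psi> i = real (n choose i) / real q ^ i"
proof -
  have "PP q n \<psi> i = (\<Sum>T\<in>{T. T \<subseteq> {0..<n} \<and> card T = i}. 1 / real q ^ i)"
    unfolding PP_def using Pur_uniform[OF assms(1) _ _ assms(3,4)] assms(2) by (intro sum.cong) auto
  also have "\<dots> = real (n choose i) / real q ^ i" by (simp add: n_subsets)
  finally show ?thesis .
qed

lemma PP_compl:
  assumes "i \<le> n"
  shows "PP q n \<psi> (n - i) = PP q n \<psi> i"
proof -
  let ?U = "{0..<n}"
  have bij: "bij_betw (\<lambda>T. ?U - T) {T. T \<subseteq> ?U \<and> card T = i} {T. T \<subseteq> ?U \<and> card T = n - i}"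
  proof (rule bij_betwI[where g="\<lambda>T. ?U - T"])
    show "(\<lambda>T. ?U - T) \<in> {T. T \<subseteq> ?U \<and> card T = i} \<rightarrow> {T. T \<subseteq> ?U \<and> card T = n - i}"
      by (auto simp: card_Diff_subset finite_subset)
    show "(\<lambda>T. ?U - T) \<in> {T. T \<subseteq> ?U \<and> card T = n - i} \<rightarrow> {T. T \<subseteq> ?U \<and> card T = i}"
      using assms by (auto simp: card_Diff_subset finite_subset)
  qed auto
  have "PP q n \<psi> (n - i) = (\<Sum>T\<in>{T. T \<subseteq> ?U \<and> card T = i}. Pur q n \<psi> (?U - T))"
    unfolding PP_def by (rule sum.reindex_bij_betw[OF bij, symmetric])
  also have "\<dots> = PP q n \<psi> i" unfolding PP_def by (intro sum.cong refl Pur_compl) auto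
  finally show ?thesis .
qed



lemma alt_partial:
  fixes j :: nat
  shows "k < j \<Longrightarrow> (\<Sum>i\<le>k. (-1::real) ^ i * real (j choose i)) = (-1) ^ k * real ((j - 1) choose k)"
proof (induction k)
  case 0
  then show ?case by simp
next
  case (Suc k)
  obtain j' where j': "j = Suc j'" using Suc.prems by (cases j) auto
  have "(\<Sum>i\<le>Suc k. (-1::real) ^ i * real (j choose i)) = (-1) ^ k * real (j' choose k) + (-1) ^ Suc k * real (j choose Suc k)"
    using Suc j' by simp
  also have "\<dots> = (-1) ^ Suc k * real (j' choose Suc k)"
    using j' by (simp add: algebra_simps)
  finally show ?case using j' by simp
qed

lemma low_part:
  assumes "k < j" "j \<le> n"
  shows "(\<Sum>i\<le>k. (-1::real) ^ (j - i) * real ((n - i) choose (j - i)) * real (n choose i))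
       = (-1) ^ (j - k) * real (n choose j) * real ((j - 1) choose k)"
proof -
  have "(\<Sum>i\<le>k. (-1::real) ^ (j - i) * real ((n - i) choose (j - i)) * real (n choose i))
      = (\<Sum>i\<le>k. (-1::real) ^ j * real (n choose j) * ((-1) ^ i * real (j choose i)))"
  proof (rule sum.cong[OF refl])
    fix i assume "i \<in> {..k}"
    then have ij: "i \<le> j" using assms by auto
    have c: "(n choose j) * (j choose i) = (n choose i) * ((n - i) choose (j - i))"
      using choose_mult[OF ij assms(2)] .
    have s: "(-1::real) ^ (j - i) = (-1) ^ j * (-1) ^ i"
    proof -
      have e1: "(-1::real) ^ j = (-1) ^ (j - i) * (-1) ^ i" using ij by (simp add: power_add[symmetric])
      have e2: "(-1::real) ^ i * (-1) ^ i = 1" by (simp add: power_mult_distrib[symmetric])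
      have "(-1::real) ^ j * (-1) ^ i = (-1) ^ (j - i) * ((-1) ^ i * (-1) ^ i)" unfolding e1 by (simp only: mult.assoc)
      then show ?thesis using e2 by simp
    qed
    show "(-1::real) ^ (j - i) * real ((n - i) choose (j - i)) * real (n choose i)
        = (-1::real) ^ j * real (n choose j) * ((-1) ^ i * real (j choose i))"
      using arg_cong[OF c, of real] unfolding s of_nat_mult by (simp add: mult_ac)
  qed
  also have "\<dots> = (-1::real) ^ j * real (n choose j) * ((-1) ^ k * real ((j - 1) choose k))"
    by (simp add: sum_distrib_left[symmetric] alt_partial[OF assms(1)])
  also have "\<dots> = (-1) ^ (j - k) * real (n choose j) * real ((j - 1) choose k)"
  proof -
    have e1: "(-1::real) ^ j = (-1) ^ (j - k) * (-1) ^ k" using assms by (simp add: power_add[symmetric])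
    have e2: "(-1::real) ^ k * (-1) ^ k = 1" by (simp add: power_mult_distrib[symmetric])
    have "(-1::real) ^ j * (-1) ^ k = (-1) ^ (j - k) * ((-1) ^ k * (-1) ^ k)" unfolding e1 by (simp only: mult.assoc)
    then have "(-1::real) ^ j * (-1) ^ k = (-1) ^ (j - k)" using e2 by simp
    then show ?thesis by (metis (no_types, lifting) mult.assoc mult.commute)
  qed
  finally show ?thesis .
qed

lemma Aj_gen:
  assumes ku: "k_uniform q n k \<psi>" and q: "q > 0" and d: "0 < d" and kd: "k + d \<le> n"
  shows "0 \<le> (-1) ^ d * real (n choose (k + d)) * real ((k + d - 1) choose k)
     + (\<Sum>t<d. (-1::real) ^ (d - 1 - t) * real ((n - (k + 1 + t)) choose (d - 1 - t)) * real q ^ (k + 1 + t) * PP q n \<psi> (k + 1 + t))"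
proof -
  let ?j = "k + d"
  let ?f = "\<lambda>i. (-1::real) ^ (?j - i) * real ((n - i) choose (?j - i)) * real q ^ i * PP q n \<psi> i"
  have split: "{..?j} = {..k} \<union> (\<lambda>t. k + 1 + t) ` {..<d}"
  proof -
    have img: "i \<in> (\<lambda>t. k + 1 + t) ` {..<d}" if "k < i" "i \<le> ?j" for i
      using that by (intro image_eqI[of _ _ "i - k - 1"]) auto
    show ?thesis
    proof (rule set_eqI)
      fix i show "i \<in> {..?j} \<longleftrightarrow> i \<in> {..k} \<union> (\<lambda>t. k + 1 + t) ` {..<d}"
        using img[of i] by (cases "k < i") auto
    qed
  qed
  have disj: "{..k} \<inter> (\<lambda>t. k + 1 + t) ` {..<d} = {}" by auto
  have "0 \<le> sum ?f {..?j}" using Aj_nonneg[OF kd] .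
  also have "\<dots> = sum ?f {..k} + sum ?f ((\<lambda>t. k + 1 + t) ` {..<d})"
    unfolding split by (rule sum.union_disjoint) (use disj in auto)
  also have "sum ?f ((\<lambda>t. k + 1 + t) ` {..<d}) = (\<Sum>t<d. ?f (k + 1 + t))"
    by (subst sum.reindex) (auto simp: inj_on_def)
  also have "sum ?f {..k} = (\<Sum>i\<le>k. (-1::real) ^ (?j - i) * real ((n - i) choose (?j - i)) * real (n choose i))"
  proof (rule sum.cong[OF refl])
    fix i assume "i \<in> {..k}"
    then have "PP q n \<psi> i = real (n choose i) / real q ^ i" using PP_low[OF ku _ _ q] kd by auto
    then show "?f i = (-1::real) ^ (?j - i) * real ((n - i) choose (?j - i)) * real (n choose i)"
      using q by simp
  qed
  also have "\<dots> = (-1) ^ d * real (n choose (k + d)) * real ((k + d - 1) choose k)"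
    using low_part[of k ?j n] d kd by simp
  also have "(\<Sum>t<d. ?f (k + 1 + t)) = (\<Sum>t<d. (-1::real) ^ (d - 1 - t) * real ((n - (k + 1 + t)) choose (d - 1 - t)) * real q ^ (k + 1 + t) * PP q n \<psi> (k + 1 + t))"
  proof (rule sum.cong[OF refl])
    fix t assume "t \<in> {..<d}"
    then have "?j - (k + 1 + t) = d - 1 - t" by auto
    then show "?f (k + 1 + t) = (-1::real) ^ (d - 1 - t) * real ((n - (k + 1 + t)) choose (d - 1 - t)) * real q ^ (k + 1 + t) * PP q n \<psi> (k + 1 + t)"
      by simp
  qed
  finally show ?thesis .
qed

lemma ch_ratio: "real (n choose Suc j) * real (Suc j) = real (n choose j) * (real n - real j)" if "j \<le> n"
proof (cases n)
  case 0
  then show ?thesis using that by simp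
next
  case (Suc n')
  have a: "Suc n' * (n' choose j) = (Suc n' choose Suc j) * Suc j" by (rule Suc_times_binomial_eq)
  have b: "(n - j) * (n choose j) = n * ((n - 1) choose j)" by (rule binomial_absorb_comp)
  have "(n choose Suc j) * Suc j = (n choose j) * (n - j)" using a b Suc by (simp add: mult_ac)
  then have "real ((n choose Suc j) * Suc j) = real ((n choose j) * (n - j))" by simp
  then show ?thesis using that by (simp add: of_nat_diff algebra_simps)
qed

lemma ch2: "real (N choose 2) = real N * (real N - 1) / 2"
  by (induction N) (auto simp: numeral_2_eq_2 field_simps)

lemma ch3: "real (N choose 3) = real N * (real N - 1) * (real N - 2) / 6"
proof (induction N)
  case 0
  then show ?case by (simp add: numeral_3_eq_3)
next
  case (Suc N)
  have "Suc N choose 3 = (N choose 2) + (N choose 3)" by (simp add: numeral_3_eq_3 numeral_2_eq_2)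
  then show ?case using Suc ch2[of N] by (simp add: field_simps)
qed



lemma Aj2:
  assumes ku: "k_uniform q n k \<psi>" and q: "q > 0" and kn: "k + 2 \<le> n"
  shows "0 \<le> real (n choose (k + 2)) * real (k + 1) - real (n - (k + 1)) * (real q ^ (k + 1) * PP q n \<psi> (k + 1))
             + real q ^ (k + 2) * PP q n \<psi> (k + 2)"
  using Aj_gen[OF ku q, of 2] kn
  by (simp add: numeral_2_eq_2 del: binomial_Suc_Suc) (simp add: algebra_simps of_nat_diff)

lemma Aj3:
  assumes ku: "k_uniform q n k \<psi>" and q: "q > 0" and kn: "k + 3 \<le> n"
  shows "0 \<le> - real (n choose (k + 3)) * real ((k + 2) choose 2)
             + real ((n - (k + 1)) choose 2) * (real q ^ (k + 1) * PP q n \<psi> (k + 1))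
             - real (n - (k + 2)) * (real q ^ (k + 2) * PP q n \<psi> (k + 2))
             + real q ^ (k + 3) * PP q n \<psi> (k + 3)"
proof -
  have s: "(k + 2) choose k = (k + 2) choose 2" using binomial_symmetric[of k "k+2"] by simp
  show ?thesis
  using Aj_gen[OF ku q, of 3] kn s
  by (simp add: numeral_3_eq_3 numeral_2_eq_2 del: binomial_Suc_Suc) (simp add: algebra_simps of_nat_diff)
qed

lemma Aj4:
  assumes ku: "k_uniform q n k \<psi>" and q: "q > 0" and kn: "k + 4 \<le> n"
  shows "0 \<le> real (n choose (k + 4)) * real ((k + 3) choose 3)
             - real ((n - (k + 1)) choose 3) * (real q ^ (k + 1) * PP q n \<psi> (k + 1))
             + real ((n - (k + 2)) choose 2) * (real q ^ (k + 2) * PP q n \<psi> (k + 2))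
             - real (n - (k + 3)) * (real q ^ (k + 3) * PP q n \<psi> (k + 3))
             + real q ^ (k + 4) * PP q n \<psi> (k + 4)"
proof -
  have s: "(k + 3) choose k = (k + 3) choose 3" using binomial_symmetric[of k "k+3"] by simp
  show ?thesis
  using Aj_gen[OF ku q, of 4] kn s
  by (simp add: numeral_3_eq_3 numeral_2_eq_2 eval_nat_numeral del: binomial_Suc_Suc) (simp add: algebra_simps of_nat_diff)
qed



lemma PP_sym_low:
  assumes ku: "k_uniform q n k \<psi>" and q: "q > 0" and i: "i \<le> k" "k \<le> n" and i2: "2 * i \<le> n"
  shows "real q ^ (n - i) * PP q n \<psi> (n - i) = real q ^ (n - 2 * i) * real (n choose i)"
proof -
  have "PP q n \<psi> (n - i) = real (n choose i) / real q ^ i"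
    using PP_compl[of i n q \<psi>] PP_low[OF ku i q] i by simp
  moreover have "real q ^ (n - i) = real q ^ (n - 2 * i) * real q ^ i"
    using i2 by (simp add: power_add[symmetric])
  ultimately show ?thesis using q by simp
qed

lemma case_even1:
  assumes ku: "k_uniform q n k \<psi>" and q2: "q \<ge> 2" and n: "n = 2 * k + 2" and big: "k + 1 > 2 * q\<^sup>2"
  shows False
proof -
  have q: "q > 0" using q2 by auto
  have "q\<^sup>2 \<ge> 4" using power_mono[OF q2, of 2] by simp
  then have k1: "k \<ge> 1" using big by auto
  define x where "x = real q ^ (k + 1) * PP q n \<psi> (k + 1)"
  define c1 where "c1 = real (n choose (k + 2))"
  define c2 where "c2 = real (n choose (k + 3))"
  define K where "K = real k"
  define Q where "Q = real q ^ 2"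
  have P2: "real q ^ (k + 2) * PP q n \<psi> (k + 2) = Q * c1"
  proof -
    have "real q ^ (n - k) * PP q n \<psi> (n - k) = real q ^ (n - 2 * k) * real (n choose k)"
      by (rule PP_sym_low[OF ku q]) (use n in auto)
    moreover have "n choose k = n choose (k + 2)" using binomial_symmetric[of k n] n by simp
    ultimately show ?thesis using n by (simp add: Q_def c1_def)
  qed
  have P3: "real q ^ (k + 3) * PP q n \<psi> (k + 3) = Q\<^sup>2 * c2"
  proof -
    have F: "real q ^ (n - (k - 1)) * PP q n \<psi> (n - (k - 1)) = real q ^ (n - 2 * (k - 1)) * real (n choose (k - 1))"
      by (rule PP_sym_low[OF ku q]) (use n in auto)
    have b: "n choose (k - 1) = n choose (k + 3)" using binomial_symmetric[of "k - 1" n] n k1 by simp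
    have e: "n - (k - 1) = k + 3" "n - 2 * (k - 1) = 4" using n k1 by auto
    show ?thesis using F unfolding b e by (simp add: Q_def c2_def power_mult[symmetric])
  qed
  have E1: "0 \<le> c1 * (K + 1) - (K + 1) * x + Q * c1"
  proof -
    have a: "real (k + 1) = K + 1" "real (n - (k + 1)) = K + 1" using n K_def by auto
    show ?thesis using Aj2[OF ku q] n unfolding a P2 c1_def[symmetric] x_def[symmetric] by simp
  qed
  have E2: "0 \<le> - c2 * ((K + 2) * (K + 1) / 2) + (K + 1) * K / 2 * x - K * (Q * c1) + Q\<^sup>2 * c2"
  proof -
    have a: "real ((k + 2) choose 2) = (K + 2) * (K + 1) / 2" unfolding ch2 K_def by (simp add: algebra_simps)
    have b: "real ((n - (k + 1)) choose 2) = (K + 1) * K / 2" unfolding ch2 K_def using n by simp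
    have c: "real (n - (k + 2)) = K" using n K_def by simp
    have kn: "k + 3 \<le> n" using n k1 by simp
    show ?thesis using Aj3[OF ku q kn] unfolding a b c P2 P3 c1_def[symmetric] c2_def[symmetric] x_def[symmetric]
      by simp
  qed
  have ratio: "c2 * (K + 3) = c1 * K"
  proof -
    have r: "real (n choose Suc (k + 2)) * real (Suc (k + 2)) = real (n choose (k + 2)) * (real n - real (k + 2))"
      by (rule ch_ratio) (use n in simp)
    have e: "Suc (k + 2) = k + 3" by simp
    have f: "real (k + 3) = K + 3" "real n - real (k + 2) = K" using n K_def by auto
    show ?thesis using r unfolding e f c1_def[symmetric] c2_def[symmetric] .
  qed
  have c1pos: "c1 > 0"
  proof -
    have "k + 2 \<le> n" using n by simp
    then have "0 < n choose (k + 2)" by (rule zero_less_binomial)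
    then show ?thesis unfolding c1_def by (simp only: of_nat_0_less_iff)
  qed
  have Kpos: "K > 0" using k1 K_def by simp
  have Qbig: "Q > 1"
  proof -
    have "(2::real) ^ 2 \<le> real q ^ 2" by (rule power_mono) (use q2 in auto)
    then show ?thesis unfolding Q_def by simp
  qed
  have Kbig: "K + 1 > 2 * Q"
  proof -
    have "real (2 * q\<^sup>2) < real (k + 1)" using big by (simp only: of_nat_less_iff)
    then show ?thesis unfolding K_def Q_def by simp
  qed
  have "0 \<le> (K / 2) * (c1 * (K + 1) - (K + 1) * x + Q * c1) + (- c2 * ((K + 2) * (K + 1) / 2) + (K + 1) * K / 2 * x - K * (Q * c1) + Q\<^sup>2 * c2)"
    using E1 E2 Kpos by simp
  then have "0 \<le> (K + 3) * ((K / 2) * (c1 * (K + 1) - (K + 1) * x + Q * c1) + (- c2 * ((K + 2) * (K + 1) / 2) + (K + 1) * K / 2 * x - K * (Q * c1) + Q\<^sup>2 * c2))"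
    using Kpos by simp
  also have "\<dots> = K * c1 * (Q - 1) * (2 * Q - K - 1) / 2"
  proof -
    have "(K + 3) * ((K / 2) * (c1 * (K + 1) - (K + 1) * x + Q * c1) + (- c2 * ((K + 2) * (K + 1) / 2) + (K + 1) * K / 2 * x - K * (Q * c1) + Q\<^sup>2 * c2))
       = K * c1 * (Q - 1) * (2 * Q - K - 1) / 2 + (c2 * (K + 3) - c1 * K) * (Q\<^sup>2 - (K + 2) * (K + 1) / 2)"
      by (simp add: field_simps power2_eq_square)
    then show ?thesis using ratio by simp
  qed
  also have "\<dots> < 0"
  proof -
    have "K * c1 * (Q - 1) > 0" using Kpos c1pos Qbig by simp
    moreover have "2 * Q - K - 1 < 0" using Kbig by simp
    ultimately show ?thesis by (simp add: mult_pos_neg)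
  qed
  finally show False by simp
qed



lemma case_odd1:
  assumes ku: "k_uniform q n k \<psi>" and q2: "q \<ge> 2" and n: "n = 2 * k + 3" and big: "k + 1 > 2 * q\<^sup>2 + 2 * q"
  shows False
proof -
  have q: "q > 0" using q2 by auto
  define x where "x = real q ^ (k + 1) * PP q n \<psi> (k + 1)"
  define c1 where "c1 = real (n choose (k + 2))"
  define c2 where "c2 = real (n choose (k + 3))"
  define K where "K = real k"
  define R where "R = real q"
  have P2: "real q ^ (k + 2) * PP q n \<psi> (k + 2) = R * x"
  proof -
    have "PP q n \<psi> (n - (k + 1)) = PP q n \<psi> (k + 1)" by (rule PP_compl) (use n in simp)
    moreover have "n - (k + 1) = k + 2" using n by simp
    ultimately show ?thesis unfolding x_def R_def by simp
  qed
  have P3: "real q ^ (k + 3) * PP q n \<psi> (k + 3) = R ^ 3 * c2"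
  proof -
    have F: "real q ^ (n - k) * PP q n \<psi> (n - k) = real q ^ (n - 2 * k) * real (n choose k)"
      by (rule PP_sym_low[OF ku q]) (use n in auto)
    have b: "n choose k = n choose (k + 3)" using binomial_symmetric[of k n] n by simp
    have e: "n - k = k + 3" "n - 2 * k = 3" using n by auto
    show ?thesis using F unfolding b e by (simp add: R_def c2_def)
  qed
  have E1: "0 \<le> c1 * (K + 1) - (K + 2) * x + R * x"
  proof -
    have a: "real (k + 1) = K + 1" "real (n - (k + 1)) = K + 2" using n K_def by auto
    show ?thesis using Aj2[OF ku q] n unfolding a P2 c1_def[symmetric] x_def[symmetric] by simp
  qed
  have E2: "0 \<le> - c2 * ((K + 2) * (K + 1) / 2) + (K + 2) * (K + 1) / 2 * x - (K + 1) * (R * x) + R ^ 3 * c2"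
  proof -
    have a: "real ((k + 2) choose 2) = (K + 2) * (K + 1) / 2" unfolding ch2 K_def by (simp add: algebra_simps)
    have b: "real ((n - (k + 1)) choose 2) = (K + 2) * (K + 1) / 2" unfolding ch2 K_def using n by (simp add: algebra_simps)
    have c: "real (n - (k + 2)) = K + 1" using n K_def by simp
    have kn: "k + 3 \<le> n" using n by simp
    show ?thesis using Aj3[OF ku q kn] unfolding a b c P2 P3 c1_def[symmetric] c2_def[symmetric] x_def[symmetric]
      by simp
  qed
  have ratio: "c2 * (K + 3) = c1 * (K + 1)"
  proof -
    have r: "real (n choose Suc (k + 2)) * real (Suc (k + 2)) = real (n choose (k + 2)) * (real n - real (k + 2))"
      by (rule ch_ratio) (use n in simp)
    have e: "Suc (k + 2) = k + 3" by simp
    have f: "real (k + 3) = K + 3" "real n - real (k + 2) = K + 1" using n K_def by auto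
    show ?thesis using r unfolding e f c1_def[symmetric] c2_def[symmetric] .
  qed
  have c1pos: "c1 > 0"
  proof -
    have "k + 2 \<le> n" using n by simp
    then have "0 < n choose (k + 2)" by (rule zero_less_binomial)
    then show ?thesis unfolding c1_def by (simp only: of_nat_0_less_iff)
  qed
  have R2: "R \<ge> 2" unfolding R_def using q2 by simp
  have Kbig: "K + 1 > 2 * R\<^sup>2 + 2 * R"
  proof -
    have "real (2 * q\<^sup>2 + 2 * q) < real (k + 1)" using big by (simp only: of_nat_less_iff)
    then show ?thesis unfolding K_def R_def by simp
  qed
  define u where "u = K + 2 - R"
  define v where "v = (K + 1) * (K + 2) / 2 - (K + 1) * R"
  have upos: "u > 0" unfolding u_def using Kbig R2 zero_le_power2[of R] by linarith
  have vpos: "v > 0"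
  proof -
    have "K + 2 > 2 * R" using Kbig R2 zero_le_power2[of R] by linarith
    then have "(K + 2) / 2 - R > 0" by simp
    moreover have "K + 1 > 0" using Kbig R2 zero_le_power2[of R] by linarith
    ultimately have "(K + 1) * ((K + 2) / 2 - R) > 0" by simp
    then show ?thesis unfolding v_def by (simp add: algebra_simps)
  qed
  let ?e1 = "c1 * (K + 1) - (K + 2) * x + R * x"
  let ?e2 = "- c2 * ((K + 2) * (K + 1) / 2) + (K + 2) * (K + 1) / 2 * x - (K + 1) * (R * x) + R ^ 3 * c2"
  define M where "M = K + 1"
  define W where "W = - (R - 1) * (M\<^sup>2 - (2 * R\<^sup>2 + 2 * R - 1) * M + 2 * R ^ 3) / 2"
  have "0 \<le> v * ?e1 + u * ?e2" using E1 E2 upos vpos by simp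
  moreover have "K + 3 \<ge> 0" unfolding K_def by simp
  ultimately have "0 \<le> (K + 3) * (v * ?e1 + u * ?e2)" by (simp only: zero_le_mult_iff) simp
  also have "\<dots> = (K + 1) * c1 * W + (c2 * (K + 3) - c1 * (K + 1)) * u * (R ^ 3 - (K + 2) * (K + 1) / 2)"
    unfolding u_def v_def W_def M_def by (simp add: field_simps power2_eq_square power3_eq_cube)
  also have "\<dots> = (K + 1) * c1 * W" using ratio by simp
  also have "\<dots> < 0"
  proof -
    have Mbig: "M > 2 * R\<^sup>2 + 2 * R" using Kbig M_def by simp
    have "M * (M - (2 * R\<^sup>2 + 2 * R - 1)) > 0" using Mbig R2
      by (intro mult_pos_pos) (smt (verit) zero_le_power2)+
    moreover have "2 * R ^ 3 > 0" using R2 by simp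
    moreover have "M\<^sup>2 - (2 * R\<^sup>2 + 2 * R - 1) * M = M * (M - (2 * R\<^sup>2 + 2 * R - 1))"
      by (simp add: algebra_simps power2_eq_square)
    ultimately have "M\<^sup>2 - (2 * R\<^sup>2 + 2 * R - 1) * M + 2 * R ^ 3 > 0"
      by linarith
    moreover have "1 - R < 0" using R2 by simp
    ultimately have "(1 - R) * (M\<^sup>2 - (2 * R\<^sup>2 + 2 * R - 1) * M + 2 * R ^ 3) < 0"
      by (simp add: mult_neg_pos)
    then have "W < 0" unfolding W_def by simp
    moreover have "(K + 1) * c1 > 0" using c1pos Kbig R2 by (smt (verit) mult_pos_pos zero_le_power2)
    ultimately show ?thesis by (simp add: mult_pos_neg)
  qed
  finally show False by simp
qed



lemma case_even2:
  assumes ku: "k_uniform q n k \<psi>" and q2: "q \<ge> 2" and n: "n = 2 * k + 4" and big: "k + 1 > 3 * q\<^sup>2"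
  shows False
proof -
  have q: "q > 0" using q2 by auto
  define y where "y = real q ^ (k + 1) * PP q n \<psi> (k + 1)"
  define x where "x = real q ^ (k + 2) * PP q n \<psi> (k + 2)"
  define c0 where "c0 = real (n choose (k + 2))"
  define c1 where "c1 = real (n choose (k + 3))"
  define c2 where "c2 = real (n choose (k + 4))"
  define M where "M = real k + 2"
  define Q where "Q = real q ^ 2"
  have P3: "real q ^ (k + 3) * PP q n \<psi> (k + 3) = Q * y"
  proof -
    have "PP q n \<psi> (n - (k + 1)) = PP q n \<psi> (k + 1)" by (rule PP_compl) (use n in simp)
    moreover have "n - (k + 1) = k + 3" using n by simp
    moreover have "real q ^ (k + 3) = real q ^ 2 * real q ^ (k + 1)"
    proof -
      have e: "k + 3 = 2 + (k + 1)" by simp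
      show ?thesis unfolding e by (rule power_add)
    qed
    ultimately show ?thesis unfolding y_def Q_def by simp
  qed
  have P4: "real q ^ (k + 4) * PP q n \<psi> (k + 4) = Q\<^sup>2 * c2"
  proof -
    have F: "real q ^ (n - k) * PP q n \<psi> (n - k) = real q ^ (n - 2 * k) * real (n choose k)"
      by (rule PP_sym_low[OF ku q]) (use n in auto)
    have b: "n choose k = n choose (k + 4)" using binomial_symmetric[of k n] n by simp
    have e: "n - k = k + 4" "n - 2 * k = 4" using n by auto
    show ?thesis using F unfolding b e by (simp add: Q_def c2_def power_mult[symmetric])
  qed
  have E1: "0 \<le> c0 * (M - 1) - (M + 1) * y + x"
  proof -
    have a: "real (k + 1) = M - 1" "real (n - (k + 1)) = M + 1" using n M_def by auto
    show ?thesis using Aj2[OF ku q] n unfolding a c0_def[symmetric] x_def[symmetric] y_def[symmetric] by simp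
  qed
  have E2: "0 \<le> - c1 * (M * (M - 1) / 2) + (M + 1) * M / 2 * y - M * x + Q * y"
  proof -
    have a: "real ((k + 2) choose 2) = M * (M - 1) / 2" unfolding ch2 M_def by (simp add: algebra_simps)
    have b: "real ((n - (k + 1)) choose 2) = (M + 1) * M / 2" unfolding ch2 M_def using n by (simp add: algebra_simps)
    have c: "real (n - (k + 2)) = M" using n M_def by simp
    have kn: "k + 3 \<le> n" using n by simp
    show ?thesis using Aj3[OF ku q kn] unfolding a b c P3 c1_def[symmetric] x_def[symmetric] y_def[symmetric]
      by simp
  qed
  have E3: "0 \<le> c2 * ((M + 1) * M * (M - 1) / 6) - (M + 1) * M * (M - 1) / 6 * y + M * (M - 1) / 2 * x - (M - 1) * (Q * y) + Q\<^sup>2 * c2"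
  proof -
    have a: "real ((k + 3) choose 3) = (M + 1) * M * (M - 1) / 6" unfolding ch3 M_def by (simp add: algebra_simps)
    have b: "real ((n - (k + 1)) choose 3) = (M + 1) * M * (M - 1) / 6" unfolding ch3 M_def using n by (simp add: algebra_simps)
    have b2: "real ((n - (k + 2)) choose 2) = M * (M - 1) / 2" unfolding ch2 M_def using n by (simp add: algebra_simps)
    have c: "real (n - (k + 3)) = M - 1" using n M_def by simp
    have kn: "k + 4 \<le> n" using n by simp
    show ?thesis using Aj4[OF ku q kn] unfolding a b b2 c P3 P4 c2_def[symmetric] x_def[symmetric] y_def[symmetric]
      by simp
  qed
  have ratio1: "c1 * (M + 1) = c0 * M"
  proof -
    have r: "real (n choose Suc (k + 2)) * real (Suc (k + 2)) = real (n choose (k + 2)) * (real n - real (k + 2))"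
      by (rule ch_ratio) (use n in simp)
    have e: "Suc (k + 2) = k + 3" by simp
    have f: "real (k + 3) = M + 1" "real n - real (k + 2) = M" using n M_def by auto
    show ?thesis using r unfolding e f c0_def[symmetric] c1_def[symmetric] .
  qed
  have ratio2: "c2 * (M + 2) = c1 * (M - 1)"
  proof -
    have r: "real (n choose Suc (k + 3)) * real (Suc (k + 3)) = real (n choose (k + 3)) * (real n - real (k + 3))"
      by (rule ch_ratio) (use n in simp)
    have e: "Suc (k + 3) = k + 4" by simp
    have f: "real (k + 4) = M + 2" "real n - real (k + 3) = M - 1" using n M_def by auto
    show ?thesis using r unfolding e f c1_def[symmetric] c2_def[symmetric] .
  qed
  have c0pos: "c0 > 0"
  proof -
    have "k + 2 \<le> n" using n by simp
    then have "0 < n choose (k + 2)" by (rule zero_less_binomial)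
    then show ?thesis unfolding c0_def by (simp only: of_nat_0_less_iff)
  qed
  have Qbig: "Q \<ge> 4"
  proof -
    have "(2::real) ^ 2 \<le> real q ^ 2" by (rule power_mono) (use q2 in auto)
    then show ?thesis unfolding Q_def by simp
  qed
  have Mbig: "M \<ge> 3 * Q + 2"
  proof -
    have "3 * q\<^sup>2 \<le> k" using big by simp
    then have "real (3 * q\<^sup>2) \<le> real k" by (simp only: of_nat_le_iff)
    then show ?thesis unfolding M_def Q_def by simp
  qed
  define l1 where "l1 = M * (M - 1) * (M * (M + 1) - 6 * Q) / 12"
  define l2 where "l2 = (M - 1) * (M * (M + 1) - 3 * Q) / 3"
  define l3 where "l3 = M * (M + 1) / 2 - Q"
  have MM: "M * (M + 1) \<ge> (3 * Q + 2) * (3 * Q + 3)"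
    using Mbig Qbig by (intro mult_mono) auto
  have MQ: "M * (M + 1) - 6 * Q > 0" using MM Qbig by (simp add: algebra_simps) (smt (verit) mult_nonneg_nonneg)
  have l1p: "l1 \<ge> 0" unfolding l1_def using MQ Mbig Qbig by simp
  have l2p: "l2 \<ge> 0" unfolding l2_def using MQ Mbig Qbig by simp
  have l3p: "l3 \<ge> 0" unfolding l3_def using MQ Mbig Qbig by simp
  let ?e1 = "c0 * (M - 1) - (M + 1) * y + x"
  let ?e2 = "- c1 * (M * (M - 1) / 2) + (M + 1) * M / 2 * y - M * x + Q * y"
  let ?e3 = "c2 * ((M + 1) * M * (M - 1) / 6) - (M + 1) * M * (M - 1) / 6 * y + M * (M - 1) / 2 * x - (M - 1) * (Q * y) + Q\<^sup>2 * c2"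
  define A1 where "A1 = - l2 * M * (M - 1) / 2"
  define A2 where "A2 = l3 * ((M + 1) * M * (M - 1) / 6 + Q\<^sup>2)"
  define P where "P = (- (M ^ 3)) + 3 * Q * M\<^sup>2 + (3 * Q + 1) * M - 6 * Q * (Q + 1)"
  have "0 \<le> l1 * ?e1 + l2 * ?e2 + l3 * ?e3" using E1 E2 E3 l1p l2p l3p by simp
  moreover have "(M + 1) * (M + 2) \<ge> 0" using Mbig Qbig by simp
  ultimately have "0 \<le> (M + 1) * (M + 2) * (l1 * ?e1 + l2 * ?e2 + l3 * ?e3)" by simp
  also have "\<dots> = c0 * M * (M - 1) * (Q - 1) * P / 6 + (c1 * (M + 1) - c0 * M) * ((M + 2) * A1 + (M - 1) * A2)
      + (c2 * (M + 2) - c1 * (M - 1)) * (M + 1) * A2"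
    unfolding l1_def l2_def l3_def A1_def A2_def P_def by (simp add: field_simps power2_eq_square power3_eq_cube)
  also have "\<dots> = c0 * M * (M - 1) * (Q - 1) * P / 6" using ratio1 ratio2 by simp
  also have "\<dots> < 0"
  proof -
    have "P < 0"
    proof -
      have "M\<^sup>2 * (M - 3 * Q) \<ge> M\<^sup>2 * 2" using Mbig by (intro mult_left_mono) auto
      moreover have "(3 * Q + 1) * M \<le> M * M" using Mbig Qbig by (intro mult_right_mono) auto
      moreover have "6 * Q * (Q + 1) > 0" using Qbig by simp
      moreover have "P = - (M\<^sup>2 * (M - 3 * Q)) + (3 * Q + 1) * M - 6 * Q * (Q + 1)"
        unfolding P_def by (simp add: algebra_simps power2_eq_square power3_eq_cube)
      moreover have "M * M \<ge> 0" by simp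
      ultimately show ?thesis unfolding power2_eq_square by linarith
    qed
    moreover have "c0 * M * (M - 1) * (Q - 1) > 0" using c0pos Mbig Qbig by simp
    ultimately show ?thesis by (simp add: mult_pos_neg)
  qed
  finally show False by simp
qed



lemma case_odd2:
  assumes ku: "k_uniform q n k \<psi>" and q2: "q \<ge> 2" and n: "n = 2 * k + 5" and big: "k + 1 > 3 * q\<^sup>2 + 3 * q"
  shows False
proof -
  have q: "q > 0" using q2 by auto
  define y where "y = real q ^ (k + 1) * PP q n \<psi> (k + 1)"
  define x where "x = real q ^ (k + 2) * PP q n \<psi> (k + 2)"
  define c0 where "c0 = real (n choose (k + 2))"
  define c1 where "c1 = real (n choose (k + 3))"
  define c2 where "c2 = real (n choose (k + 4))"
  define M where "M = real k + 2"
  define R where "R = real q"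
  have P3: "real q ^ (k + 3) * PP q n \<psi> (k + 3) = R * x"
  proof -
    have "PP q n \<psi> (n - (k + 2)) = PP q n \<psi> (k + 2)" by (rule PP_compl) (use n in simp)
    moreover have "n - (k + 2) = k + 3" using n by simp
    moreover have "real q ^ (k + 3) = real q * real q ^ (k + 2)"
    proof -
      have e: "k + 3 = Suc (k + 2)" by simp
      show ?thesis unfolding e by (rule power_Suc)
    qed
    ultimately show ?thesis unfolding x_def R_def by simp
  qed
  have P4: "real q ^ (k + 4) * PP q n \<psi> (k + 4) = R ^ 3 * y"
  proof -
    have "PP q n \<psi> (n - (k + 1)) = PP q n \<psi> (k + 1)" by (rule PP_compl) (use n in simp)
    moreover have "n - (k + 1) = k + 4" using n by simp
    moreover have "real q ^ (k + 4) = real q ^ 3 * real q ^ (k + 1)"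
    proof -
      have e: "k + 4 = 3 + (k + 1)" by simp
      show ?thesis unfolding e by (rule power_add)
    qed
    ultimately show ?thesis unfolding y_def R_def by simp
  qed
  have E1: "0 \<le> c0 * (M - 1) - (M + 2) * y + x"
  proof -
    have a: "real (k + 1) = M - 1" "real (n - (k + 1)) = M + 2" using n M_def by auto
    show ?thesis using Aj2[OF ku q] n unfolding a c0_def[symmetric] x_def[symmetric] y_def[symmetric] by simp
  qed
  have E2: "0 \<le> - c1 * (M * (M - 1) / 2) + (M + 2) * (M + 1) / 2 * y - (M + 1) * x + R * x"
  proof -
    have a: "real ((k + 2) choose 2) = M * (M - 1) / 2" unfolding ch2 M_def by (simp add: algebra_simps)
    have b: "real ((n - (k + 1)) choose 2) = (M + 2) * (M + 1) / 2" unfolding ch2 M_def using n by (simp add: algebra_simps)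
    have c: "real (n - (k + 2)) = M + 1" using n M_def by simp
    have kn: "k + 3 \<le> n" using n by simp
    show ?thesis using Aj3[OF ku q kn] unfolding a b c P3 c1_def[symmetric] x_def[symmetric] y_def[symmetric]
      by simp
  qed
  have E3: "0 \<le> c2 * ((M + 1) * M * (M - 1) / 6) - (M + 2) * (M + 1) * M / 6 * y + (M + 1) * M / 2 * x - M * (R * x) + R ^ 3 * y"
  proof -
    have a: "real ((k + 3) choose 3) = (M + 1) * M * (M - 1) / 6" unfolding ch3 M_def by (simp add: algebra_simps)
    have b: "real ((n - (k + 1)) choose 3) = (M + 2) * (M + 1) * M / 6" unfolding ch3 M_def using n by (simp add: algebra_simps)
    have b2: "real ((n - (k + 2)) choose 2) = (M + 1) * M / 2" unfolding ch2 M_def using n by (simp add: algebra_simps)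
    have c: "real (n - (k + 3)) = M" using n M_def by simp
    have kn: "k + 4 \<le> n" using n by simp
    show ?thesis using Aj4[OF ku q kn] unfolding a b b2 c P3 P4 c2_def[symmetric] x_def[symmetric] y_def[symmetric]
      by simp
  qed
  have ratio1: "c1 = c0"
  proof -
    have r: "real (n choose Suc (k + 2)) * real (Suc (k + 2)) = real (n choose (k + 2)) * (real n - real (k + 2))"
      by (rule ch_ratio) (use n in simp)
    have e: "Suc (k + 2) = k + 3" by simp
    have f: "real (k + 3) = M + 1" "real n - real (k + 2) = M + 1" using n M_def by auto
    have "c1 * (M + 1) = c0 * (M + 1)" using r unfolding e f c0_def[symmetric] c1_def[symmetric] .
    moreover have "M + 1 \<noteq> 0" unfolding M_def by simp
    ultimately show ?thesis by simp
  qed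
  have ratio2: "c2 * (M + 2) = c1 * M"
  proof -
    have r: "real (n choose Suc (k + 3)) * real (Suc (k + 3)) = real (n choose (k + 3)) * (real n - real (k + 3))"
      by (rule ch_ratio) (use n in simp)
    have e: "Suc (k + 3) = k + 4" by simp
    have f: "real (k + 4) = M + 2" "real n - real (k + 3) = M" using n M_def by auto
    show ?thesis using r unfolding e f c1_def[symmetric] c2_def[symmetric] .
  qed
  have c0pos: "c0 > 0"
  proof -
    have "k + 2 \<le> n" using n by simp
    then have "0 < n choose (k + 2)" by (rule zero_less_binomial)
    then show ?thesis unfolding c0_def by (simp only: of_nat_0_less_iff)
  qed
  have R2: "R \<ge> 2" unfolding R_def using q2 by simp
  have Mbig: "M \<ge> 3 * R\<^sup>2 + 3 * R + 2"
  proof -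
    have "3 * q\<^sup>2 + 3 * q \<le> k" using big by simp
    then have "real (3 * q\<^sup>2 + 3 * q) \<le> real k" by (simp only: of_nat_le_iff)
    then show ?thesis unfolding M_def R_def by simp
  qed
  have RR: "R\<^sup>2 \<ge> 2 * R" using R2 by (simp add: power2_eq_square)
  have M4: "M + 1 - 4 * R > 0" using Mbig RR R2 by linarith
  have M3': "M + 1 > 3 * R" using Mbig RR R2 by linarith
  then have M3: "(M + 1) / 3 - R > 0" by (simp add: field_simps)
  have M2: "M + 1 - 2 * R > 0" using Mbig RR R2 by linarith
  have Mpos: "M > 1" using Mbig RR R2 by linarith
  define l1 where "l1 = (M + 2) * (M + 1) * M * (M + 1 - 4 * R) / 12 + R ^ 3 * (M + 1 - R)"
  define l2 where "l2 = M * (M + 2) * ((M + 1) / 3 - R) + R ^ 3"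
  define l3 where "l3 = (M + 2) * (M + 1 - 2 * R) / 2"
  have l1p: "l1 \<ge> 0" unfolding l1_def using M4 Mpos R2 by (intro add_nonneg_nonneg) simp_all
  have l2p: "l2 \<ge> 0" unfolding l2_def using M3 Mpos R2 by (intro add_nonneg_nonneg) simp_all
  have l3p: "l3 \<ge> 0" unfolding l3_def using M2 Mpos by simp
  let ?e1 = "c0 * (M - 1) - (M + 2) * y + x"
  let ?e2 = "- c1 * (M * (M - 1) / 2) + (M + 2) * (M + 1) / 2 * y - (M + 1) * x + R * x"
  let ?e3 = "c2 * ((M + 1) * M * (M - 1) / 6) - (M + 2) * (M + 1) * M / 6 * y + (M + 1) * M / 2 * x - M * (R * x) + R ^ 3 * y"
  define A1 where "A1 = - l2 * M * (M - 1) / 2"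
  define A2 where "A2 = l3 * (M + 1) * M * (M - 1) / 6"
  define P where "P = (- (M ^ 4)) + (3 * R\<^sup>2 + 3 * R - 2) * M ^ 3 + (- 6 * R ^ 3 + 3 * R\<^sup>2 + 3 * R + 1) * M\<^sup>2
     + (- 6 * R ^ 3 - 6 * R\<^sup>2 - 6 * R + 2) * M + 12 * R ^ 3"
  have "0 \<le> l1 * ?e1 + l2 * ?e2 + l3 * ?e3" using E1 E2 E3 l1p l2p l3p by simp
  moreover have "M + 2 \<ge> 0" using Mpos by simp
  ultimately have "0 \<le> (M + 2) * (l1 * ?e1 + l2 * ?e2 + l3 * ?e3)" by simp
  also have "\<dots> = c0 * (R - 1) * P / 6 + (c1 - c0) * ((M + 2) * A1 + M * A2) + (c2 * (M + 2) - c1 * M) * A2"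
    unfolding l1_def l2_def l3_def A1_def A2_def P_def
    by (simp add: field_simps power2_eq_square power3_eq_cube power4_eq_xxxx)
  also have "\<dots> = c0 * (R - 1) * P / 6" using ratio1 ratio2 by simp
  also have "\<dots> < 0"
  proof -
    have "P < 0"
    proof -
      define D where "D = M - 3 * R\<^sup>2 - 3 * R + 2"
      have D4: "D \<ge> 4" unfolding D_def using Mbig by simp
      have M3p: "M ^ 3 > 0" using Mpos by simp
      have f1: "M ^ 3 * D \<ge> M ^ 3 * 4" using D4 M3p by (intro mult_left_mono) auto
      have f2: "M\<^sup>2 * (3 * R\<^sup>2 + 3 * R + 1) \<le> M\<^sup>2 * M" using Mbig by (intro mult_left_mono) auto
      have f2': "M\<^sup>2 * M = M ^ 3" by (simp add: power2_eq_square power3_eq_cube)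
      have r3: "R ^ 3 \<ge> 0" using R2 by simp
      have "6 * R ^ 3 + 6 * R\<^sup>2 + 6 * R - 2 \<ge> 0" using R2 r3 zero_le_power2[of R] by linarith
      then have f3: "M * (6 * R ^ 3 + 6 * R\<^sup>2 + 6 * R - 2) \<ge> 0" using Mpos by (intro mult_nonneg_nonneg) auto
      have "M \<ge> 2" using Mbig RR R2 by linarith
      then have "(2::real) ^ 2 \<le> M ^ 2" by (intro power_mono) auto
      then have MM: "M\<^sup>2 \<ge> 2" by simp
      have f4: "R ^ 3 * 2 \<le> R ^ 3 * M\<^sup>2" using MM R2 by (intro mult_left_mono) auto
      have eq: "P = - (M ^ 3 * D) + M\<^sup>2 * (3 * R\<^sup>2 + 3 * R + 1) - 6 * (R ^ 3 * M\<^sup>2) - M * (6 * R ^ 3 + 6 * R\<^sup>2 + 6 * R - 2) + 6 * (R ^ 3 * 2)"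
        unfolding P_def D_def by (simp add: algebra_simps power2_eq_square power3_eq_cube power4_eq_xxxx)
      show ?thesis using eq f1 f2 f2' f3 f4 M3p by linarith
    qed
    moreover have "c0 * (R - 1) > 0" using c0pos R2 by simp
    ultimately show ?thesis by (simp add: mult_pos_neg)
  qed
  finally show False by simp
qed



theorem theorem4:
  fixes q n :: nat
  assumes "q \<ge> 2" and "n > 0"
  shows "((even n \<and> n > 4 * q\<^sup>2) \<or> (odd n \<and> n > 4 * q\<^sup>2 + 4 * q + 1)
            \<longrightarrow> \<not> (\<exists>\<psi>. AME_defect q n 1 \<psi>))
       \<and> ((even n \<and> n > 6 * q\<^sup>2 + 2) \<or> (odd n \<and> n > 6 * q\<^sup>2 + 6 * q + 3)
            \<longrightarrow> \<not> (\<exists>\<psi>. AME_defect q n 2 \<psi>))"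
proof (intro conjI impI notI)
  have Q4: "q\<^sup>2 \<ge> 4" using power_mono[OF assms(1), of 2] by simp
  {
    assume h: "(even n \<and> n > 4 * q\<^sup>2) \<or> (odd n \<and> n > 4 * q\<^sup>2 + 4 * q + 1)"
      and ex: "\<exists>\<psi>. AME_defect q n 1 \<psi>"
    from ex obtain \<psi> where ku: "k_uniform q n (n div 2 - 1) \<psi>" unfolding AME_defect_def by blast
    show False
    proof (cases "even n")
      case True
      then obtain m where n: "n = 2 * m" by blast
      have "n div 2 - 1 = m - 1" using n by simp
      moreover have "2 * (m - 1) + 2 = n" "m - 1 + 1 > 2 * q\<^sup>2" using h True n Q4 by auto
      ultimately show False using case_even1[OF _ assms(1)] ku by metis
    next
      case False
      then obtain m where n: "n = 2 * m + 1" using oddE by blast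
      have "n div 2 - 1 = m - 1" using n by simp
      moreover have "2 * (m - 1) + 3 = n" "m - 1 + 1 > 2 * q\<^sup>2 + 2 * q" using h False n Q4 by auto
      ultimately show False using case_odd1[OF _ assms(1)] ku by metis
    qed
  }
  {
    assume h: "(even n \<and> n > 6 * q\<^sup>2 + 2) \<or> (odd n \<and> n > 6 * q\<^sup>2 + 6 * q + 3)"
      and ex: "\<exists>\<psi>. AME_defect q n 2 \<psi>"
    from ex obtain \<psi> where ku: "k_uniform q n (n div 2 - 2) \<psi>" unfolding AME_defect_def by blast
    show False
    proof (cases "even n")
      case True
      then obtain m where n: "n = 2 * m" by blast
      have "n div 2 - 2 = m - 2" using n by simp
      moreover have "2 * (m - 2) + 4 = n" "m - 2 + 1 > 3 * q\<^sup>2" using h True n Q4 by auto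
      ultimately show False using case_even2[OF _ assms(1)] ku by metis
    next
      case False
      then obtain m where n: "n = 2 * m + 1" using oddE by blast
      have "n div 2 - 2 = m - 2" using n by simp
      moreover have "2 * (m - 2) + 5 = n" "m - 2 + 1 > 3 * q\<^sup>2 + 3 * q" using h False n Q4 by auto
      ultimately show False using case_odd2[OF _ assms(1)] ku by metis
    qed
  }
qed


end
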